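(* For any real numbers $a,b$ with $a\neq\pm b$ and any natural number $n\ge1$: if $n$ is even, $\Psi(a,-b,n)=\Psi(-a,-b,n)$ and $\Phi(a,-b,n)=\Phi(-a,-b,n)$; if $n$ is odd, $\Psi(a,-b,n)=\Phi(-a,-b,n)$ and $\Phi(a,-b,n)=\Psi(-a,-b,n)$.
   Context: $\delta(m)=1$ for $m$ odd, $0$ for $m$ even. $\Psi(a,b,n)$, $\Phi(a,b,n)$ are defined by $\Psi(a,b,0)=2$, $\Psi(a,b,1)=1$, $\Psi(a,b,n+1)=(2a-b)^{\delta(n)}\Psi(a,b,n)-a\Psi(a,b,n-1)$ and $\Phi(a,b,0)=0$, $\Phi(a,b,1)=1$, $\Phi(a,b,n+1)=(2a-b)^{\delta(n+1)}\Phi(a,b,n)-a\Phi(a,b,n-1)$ for $n\ge1$. *)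

theory Defs
  imports Complex_Main
begin

definition delta :: "nat \<Rightarrow> nat" where
  "delta m = (if odd m then 1 else 0)"

fun Psi :: "real \<Rightarrow> real \<Rightarrow> nat \<Rightarrow> real" where
  "Psi a b 0 = 2"
| "Psi a b (Suc 0) = 1"
| "Psi a b (Suc (Suc n)) =
     (2*a - b) ^ delta (Suc n) * Psi a b (Suc n) - a * Psi a b n"

fun Phi :: "real \<Rightarrow> real \<Rightarrow> nat \<Rightarrow> real" where
  "Phi a b 0 = 0"
| "Phi a b (Suc 0) = 1"
| "Phi a b (Suc (Suc n)) =
     (2*a - b) ^ delta (Suc (Suc n)) * Phi a b (Suc n) - a * Phi a b n"

end

theory Submission
  imports Defs
begin

lemma Psi_rec4: "Psi a b (n+4) = (-b) * Psi a b (n+2) - a^2 * Psi a b n"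
proof -
  have e1: "Psi a b (n+4) = (2*a-b)^delta (n+3) * Psi a b (n+3) - a * Psi a b (n+2)"
    by (simp add: numeral_eq_Suc)
  have e2: "Psi a b (n+3) = (2*a-b)^delta (n+2) * Psi a b (n+2) - a * Psi a b (n+1)"
    by (simp add: numeral_eq_Suc)
  have e3: "Psi a b (n+2) = (2*a-b)^delta (n+1) * Psi a b (n+1) - a * Psi a b n"
    by (simp add: numeral_eq_Suc)
  show ?thesis
  proof (cases "even n")
    case True
    then have "delta (n+3) = 1" "delta (n+2) = 0" "delta (n+1) = 1" by (auto simp: delta_def)
    then show ?thesis using e1 e2 e3 by (simp add: power2_eq_square algebra_simps)
  next
    case False
    then have "delta (n+3) = 0" "delta (n+2) = 1" "delta (n+1) = 0" by (auto simp: delta_def)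
    then show ?thesis using e1 e2 e3 by (simp add: power2_eq_square algebra_simps)
  qed
qed

lemma Phi_rec4: "Phi a b (n+4) = (-b) * Phi a b (n+2) - a^2 * Phi a b n"
proof -
  have e1: "Phi a b (n+4) = (2*a-b)^delta (n+4) * Phi a b (n+3) - a * Phi a b (n+2)"
    by (simp add: numeral_eq_Suc)
  have e2: "Phi a b (n+3) = (2*a-b)^delta (n+3) * Phi a b (n+2) - a * Phi a b (n+1)"
    by (simp add: numeral_eq_Suc)
  have e3: "Phi a b (n+2) = (2*a-b)^delta (n+2) * Phi a b (n+1) - a * Phi a b n"
    by (simp add: numeral_eq_Suc)
  show ?thesis
  proof (cases "even n")
    case True
    then have "delta (n+4) = 0" "delta (n+3) = 1" "delta (n+2) = 0" by (auto simp: delta_def)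
    then show ?thesis using e1 e2 e3 by (simp add: power2_eq_square algebra_simps)
  next
    case False
    then have "delta (n+4) = 1" "delta (n+3) = 0" "delta (n+2) = 1" by (auto simp: delta_def)
    then show ?thesis using e1 e2 e3 by (simp add: power2_eq_square algebra_simps)
  qed
qed

lemma delta_small: "delta (Suc 0) = 1" "delta (Suc (Suc 0)) = 0"
  "delta (Suc (Suc (Suc 0))) = 1" "delta (Suc (Suc (Suc (Suc 0)))) = 0"
  by (simp_all add: delta_def)

lemma dvd_small: "(Suc (Suc 0) dvd Suc (Suc (Suc 0))) = False" "(Suc (Suc 0) dvd Suc (Suc (Suc (Suc 0)))) = True"
  by presburger+

lemma main:
  fixes a b :: real
  shows "n \<ge> 1 \<Longrightarrow> (even n \<longrightarrow> Psi a (-b) n = Psi (-a) (-b) n \<and> Phi a (-b) n = Phi (-a) (-b) n) \<and>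
         (odd n \<longrightarrow> Psi a (-b) n = Phi (-a) (-b) n \<and> Phi a (-b) n = Psi (-a) (-b) n)"
proof (induction n rule: less_induct)
  case (less n)
  consider "n = 1" | "n = 2" | "n = 3" | "n = 4" | m where "n = m + 4" "m \<ge> 1"
    proof -
    assume r: "n = 1 \<Longrightarrow> thesis" "n = 2 \<Longrightarrow> thesis" "n = 3 \<Longrightarrow> thesis" "n = 4 \<Longrightarrow> thesis"
      "\<And>m. n = m + 4 \<Longrightarrow> 1 \<le> m \<Longrightarrow> thesis"
    show thesis
    proof (cases "n \<le> 4")
      case True then show ?thesis using less.prems r(1-4) by linarith
    next
      case False then show ?thesis using r(5)[of "n-4"] by simp
    qed
  qed
  then show ?case
  proof cases
    case 5
    have A: "m < n" "m + 2 < n" "1 \<le> m" "1 \<le> m + 2" using 5 by auto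
    note h1 = less.IH[OF A(1) A(3)] 
    note h2 = less.IH[OF A(2) A(4)]
    show ?thesis unfolding 5 using h1 h2
      by (simp add: Psi_rec4 Phi_rec4)
  qed (simp_all add: numeral_eq_Suc delta_small dvd_small algebra_simps)
qed

theorem theorem13p2:
  fixes a b :: real and n :: nat
  assumes "a \<noteq> b" and "a \<noteq> - b" and "n \<ge> 1"
  shows "(even n \<longrightarrow> Psi a (-b) n = Psi (-a) (-b) n \<and> Phi a (-b) n = Phi (-a) (-b) n) \<and>
         (odd n \<longrightarrow> Psi a (-b) n = Phi (-a) (-b) n \<and> Phi a (-b) n = Psi (-a) (-b) n)"
  using main assms(3) by blast

end
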